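(* Let $H_1,H_2$ be graphs whose cores are both isomorphic to a graph $C$, and suppose there is a homomorphism from $H_1$ to $H_2$. Then the $C$-covering number of $H_1$ is at most the $C$-covering number of $H_2$.
   Context: A homomorphism $F\to F'$ is a vertex map sending edges to edges. A subgraph $C$ of $H$ is a core of $H$ if there is a homomorphism $H\to C$ but none from $H$ to a proper subgraph of $C$. A copy of $C$ in $F$ is a (not necessarily induced) subgraph of $F$ isomorphic to $C$. For a graph $F$ and a $c$-vertex graph $C$, a $C$-coloring of $F$ is a map $f:V(F)\to\{1,\dots,c\}$ such that the vertices of every copy of $C$ in $F$ receive pairwise distinct colors; $F$ is $C$-colorable if it has one. If $C$ is the core of $H$, a $C$-covering of $H$ of size $r$ is a collection $C_1,\dots,C_r\subseteq V(H)$ such that every copy of $C$ in $H$ lies in the subgraph induced by some $C_i$, and each induced subgraph $H[C_i]$ is $C$-colorable. The $C$-covering number of $H$ is the minimum size of a $C$-covering of $H$. *)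

theory Defs
  imports Main
begin

definition graph :: "'a set \<Rightarrow> 'a set set \<Rightarrow> bool" where
  "graph V E \<longleftrightarrow> finite V \<and> (\<forall>e\<in>E. \<exists>u v. e = {u, v} \<and> u \<noteq> v \<and> u \<in> V \<and> v \<in> V)"

definition graph_hom :: "'a set \<Rightarrow> 'a set set \<Rightarrow> 'b set \<Rightarrow> 'b set set \<Rightarrow> ('a \<Rightarrow> 'b) \<Rightarrow> bool" where
  "graph_hom V E V' E' f \<longleftrightarrow> (\<forall>v\<in>V. f v \<in> V') \<and> (\<forall>u v. {u, v} \<in> E \<longrightarrow> {f u, f v} \<in> E')"

definition subgraph :: "'a set \<Rightarrow> 'a set set \<Rightarrow> 'a set \<Rightarrow> 'a set set \<Rightarrow> bool" where
  "subgraph V' E' V E \<longleftrightarrow> graph V' E' \<and> V' \<subseteq> V \<and> E' \<subseteq> E"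

definition graph_iso :: "'a set \<Rightarrow> 'a set set \<Rightarrow> 'b set \<Rightarrow> 'b set set \<Rightarrow> ('a \<Rightarrow> 'b) \<Rightarrow> bool" where
  "graph_iso V E V' E' f \<longleftrightarrow> bij_betw f V V' \<and> (\<forall>u\<in>V. \<forall>v\<in>V. {u, v} \<in> E \<longleftrightarrow> {f u, f v} \<in> E')"

definition isomorphic :: "'a set \<Rightarrow> 'a set set \<Rightarrow> 'b set \<Rightarrow> 'b set set \<Rightarrow> bool" where
  "isomorphic V E V' E' \<longleftrightarrow> (\<exists>f. graph_iso V E V' E' f)"

definition is_core :: "'a set \<Rightarrow> 'a set set \<Rightarrow> 'a set \<Rightarrow> 'a set set \<Rightarrow> bool" where
  "is_core K EK V E \<longleftrightarrow> subgraph K EK V E \<and> (\<exists>f. graph_hom V E K EK f) \<and>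
     \<not> (\<exists>K' EK' f. subgraph K' EK' K EK \<and> (K', EK') \<noteq> (K, EK) \<and> graph_hom V E K' EK' f)"

definition core_iso_to :: "'a set \<Rightarrow> 'a set set \<Rightarrow> 'c set \<Rightarrow> 'c set set \<Rightarrow> bool" where
  "core_iso_to V E VC EC \<longleftrightarrow> (\<exists>K EK. is_core K EK V E \<and> isomorphic K EK VC EC)"

definition is_copy :: "'c set \<Rightarrow> 'c set set \<Rightarrow> 'a set \<Rightarrow> 'a set set \<Rightarrow> 'a set \<Rightarrow> 'a set set \<Rightarrow> bool" where
  "is_copy VC EC V E S ES \<longleftrightarrow> subgraph S ES V E \<and> isomorphic S ES VC EC"

definition C_coloring :: "'c set \<Rightarrow> 'c set set \<Rightarrow> 'a set \<Rightarrow> 'a set set \<Rightarrow> ('a \<Rightarrow> nat) \<Rightarrow> bool" where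
  "C_coloring VC EC V E f \<longleftrightarrow> (\<forall>v\<in>V. f v \<in> {1..card VC}) \<and>
     (\<forall>S ES. is_copy VC EC V E S ES \<longrightarrow> inj_on f S)"

definition C_colorable :: "'c set \<Rightarrow> 'c set set \<Rightarrow> 'a set \<Rightarrow> 'a set set \<Rightarrow> bool" where
  "C_colorable VC EC V E \<longleftrightarrow> (\<exists>f. C_coloring VC EC V E f)"

definition induced_edges :: "'a set set \<Rightarrow> 'a set \<Rightarrow> 'a set set" where
  "induced_edges E X = {e \<in> E. e \<subseteq> X}"

definition C_covering :: "'c set \<Rightarrow> 'c set set \<Rightarrow> 'a set \<Rightarrow> 'a set set \<Rightarrow> 'a set list \<Rightarrow> bool" where
  "C_covering VC EC V E Cs \<longleftrightarrow>
     (\<forall>X\<in>set Cs. X \<subseteq> V \<and> C_colorable VC EC X (induced_edges E X)) \<and>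
     (\<forall>S ES. is_copy VC EC V E S ES \<longrightarrow>
        (\<exists>X\<in>set Cs. subgraph S ES X (induced_edges E X)))"

definition C_covering_number :: "'c set \<Rightarrow> 'c set set \<Rightarrow> 'a set \<Rightarrow> 'a set set \<Rightarrow> nat" where
  "C_covering_number VC EC V E = (LEAST r. \<exists>Cs. length Cs = r \<and> C_covering VC EC V E Cs)"

end

theory Submission
  imports Defs
begin

lemma graph_edge_in:
  assumes "graph V E" "{u,v} \<in> E" shows "u \<in> V" "v \<in> V" "u \<noteq> v"
proof -
  obtain a b where "{u,v} = {a,b}" "a \<noteq> b" "a \<in> V" "b \<in> V"
    using assms unfolding graph_def by blast
  then show "u \<in> V" "v \<in> V" "u \<noteq> v" by (auto simp: doubleton_eq_iff)
qed

lemma copy_inj: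
  assumes hom: "graph_hom V1 E1 V2 E2 f" and g2: "graph V2 E2"
    and core: "core_iso_to V2 E2 VC EC" and cp: "is_copy VC EC V1 E1 S ES"
  shows "inj_on f S"
proof -
  obtain K EK where ck: "is_core K EK V2 E2" and iK: "isomorphic K EK VC EC"
    using core unfolding core_iso_to_def by blast
  obtain \<phi> where phi: "graph_iso K EK VC EC \<phi>" using iK unfolding isomorphic_def by blast
  obtain r where r: "graph_hom V2 E2 K EK r" using ck unfolding is_core_def by blast
  have subK: "subgraph K EK V2 E2" using ck unfolding is_core_def by blast
  have gK: "graph K EK" and KV: "K \<subseteq> V2" using subK unfolding subgraph_def by auto
  have finK: "finite K" using gK unfolding graph_def by blast
  have subS: "subgraph S ES V1 E1" and iS: "isomorphic S ES VC EC" using cp unfolding is_copy_def by auto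
  have gS: "graph S ES" and SV: "S \<subseteq> V1" and ESE: "ES \<subseteq> E1" using subS unfolding subgraph_def by auto
  obtain \<psi> where psi: "graph_iso S ES VC EC \<psi>" using iS unfolding isomorphic_def by blast
  define \<psi>i where "\<psi>i = inv_into S \<psi>"
  have bpsi: "bij_betw \<psi> S VC" using psi unfolding graph_iso_def by blast
  have bpsii: "bij_betw \<psi>i VC S" unfolding \<psi>i_def using bpsi by (rule bij_betw_inv_into)
  have bphi: "bij_betw \<phi> K VC" using phi unfolding graph_iso_def by blast
  define \<beta> where "\<beta> = \<psi>i \<circ> \<phi>"
  have bbeta: "bij_betw \<beta> K S" unfolding \<beta>_def using bphi bpsii by (rule bij_betw_trans)
  define h where "h = (r \<circ> f) \<circ> \<beta>"
  have hK: "h ` K \<subseteq> K"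
  proof
    fix y assume "y \<in> h ` K"
    then obtain x where x: "x \<in> K" "y = h x" by blast
    have "\<beta> x \<in> S" using bbeta x(1) bij_betwE by blast
    then have "f (\<beta> x) \<in> V2" using hom SV unfolding graph_hom_def by blast
    then show "y \<in> K" using r x unfolding graph_hom_def h_def by auto
  qed
  have hedge: "{h u, h v} \<in> EK" if "{u,v} \<in> EK" for u v
  proof -
    have uv: "u \<in> K" "v \<in> K" using graph_edge_in[OF gK that] by auto
    have "{\<phi> u, \<phi> v} \<in> EC" using phi uv that unfolding graph_iso_def by blast
    moreover have pu: "\<phi> u \<in> VC" "\<phi> v \<in> VC" using bphi uv bij_betwE by blast+
    moreover have "\<psi> (\<psi>i x) = x" if "x \<in> VC" for x
      unfolding \<psi>i_def using bpsi that by (simp add: bij_betw_inv_into_right)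
    moreover have "\<psi>i (\<phi> u) \<in> S" "\<psi>i (\<phi> v) \<in> S" using bpsii pu bij_betwE by blast+
    ultimately have "{\<beta> u, \<beta> v} \<in> ES" using psi unfolding graph_iso_def \<beta>_def by auto
    then have "{\<beta> u, \<beta> v} \<in> E1" using ESE by blast
    then have "{f (\<beta> u), f (\<beta> v)} \<in> E2" using hom unfolding graph_hom_def by blast
    then show ?thesis using r unfolding graph_hom_def h_def by auto
  qed
  have injh: "inj_on h K"
  proof (rule ccontr)
    assume ni: "\<not> inj_on h K"
    have "card (h ` K) < card K"
    proof -
      have "card (h ` K) \<le> card K" using card_mono[OF finK hK] .
      moreover have "card (h ` K) \<noteq> card K" using ni finK eq_card_imp_inj_on by blast
      ultimately show ?thesis by simp
    qed
    then have neq: "h ` K \<noteq> K" by auto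
    define EK' where "EK' = {{h u, h v} | u v. {u,v} \<in> EK}"
    have "subgraph (h ` K) EK' K EK"
      unfolding subgraph_def graph_def
    proof (intro conjI ballI)
      show "finite (h ` K)" using finK by blast
      show "h ` K \<subseteq> K" by fact
      show "EK' \<subseteq> EK" unfolding EK'_def using hedge by blast
    next
      fix e assume "e \<in> EK'"
      then obtain u v where e: "e = {h u, h v}" "{u,v} \<in> EK" unfolding EK'_def by blast
      have "h u \<noteq> h v" using graph_edge_in(3)[OF gK hedge[OF e(2)]] .
      moreover have "u \<in> K" "v \<in> K" using graph_edge_in[OF gK e(2)] by auto
      ultimately show "\<exists>a b. e = {a, b} \<and> a \<noteq> b \<and> a \<in> h ` K \<and> b \<in> h ` K" using e by blast
    qed
    moreover have "graph_hom V2 E2 (h ` K) EK' (h \<circ> r)"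
      unfolding graph_hom_def
    proof (intro conjI allI ballI impI)
      fix v assume "v \<in> V2" then have "r v \<in> K" using r unfolding graph_hom_def by blast
      then show "(h \<circ> r) v \<in> h ` K" by simp
    next
      fix u v assume "{u,v} \<in> E2"
      then have "{r u, r v} \<in> EK" using r unfolding graph_hom_def by blast
      then show "{(h \<circ> r) u, (h \<circ> r) v} \<in> EK'" unfolding EK'_def by auto
    qed
    ultimately show False using ck neq unfolding is_core_def by blast
  qed
  have "inj_on (r \<circ> f) (\<beta> ` K)" using injh unfolding h_def by (rule inj_on_imageI)
  then have "inj_on (r \<circ> f) S" using bbeta by (simp add: bij_betw_def)
  then show ?thesis using inj_on_imageI2 by blast
qed

lemma image_eq_inj:
  assumes "inj_on f S" "x \<in> S" "y \<in> S" "p \<in> S" "q \<in> S" "{f x, f y} = {f p, f q}"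
  shows "{x,y} = {p,q}"
proof -
  have "f ` {x,y} = f ` {p,q}" using assms(6) by simp
  then show ?thesis using assms(1-5) by (subst (asm) inj_on_image_eq_iff[OF assms(1)]) auto
qed

lemma image_copy:
  assumes hom: "graph_hom V1 E1 V2 E2 f" and cp: "is_copy VC EC V1 E1 S ES" and inj: "inj_on f S"
  shows "is_copy VC EC V2 E2 (f ` S) ((\<lambda>e. f ` e) ` ES)"
proof -
  have subS: "subgraph S ES V1 E1" and iS: "isomorphic S ES VC EC" using cp unfolding is_copy_def by auto
  have gS: "graph S ES" and SV: "S \<subseteq> V1" and ESE: "ES \<subseteq> E1" using subS unfolding subgraph_def by auto
  obtain \<psi> where psi: "graph_iso S ES VC EC \<psi>" using iS unfolding isomorphic_def by blast
  have bpsi: "bij_betw \<psi> S VC" using psi unfolding graph_iso_def by blast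
  have finS: "finite S" using gS unfolding graph_def by blast
  let ?ES' = "(\<lambda>e. f ` e) ` ES"
  have edge_iff: "{f x, f y} \<in> ?ES' \<longleftrightarrow> {x,y} \<in> ES" if "x \<in> S" "y \<in> S" for x y
  proof
    assume "{f x, f y} \<in> ?ES'"
    then obtain e where e: "e \<in> ES" "{f x, f y} = f ` e" by blast
    obtain p q where pq: "e = {p,q}" "p \<in> S" "q \<in> S" using gS e(1) unfolding graph_def by blast
    have "{x,y} = {p,q}" using image_eq_inj[OF inj that pq(2,3)] e(2) pq(1) by simp
    then show "{x,y} \<in> ES" using e pq by simp
  next
    assume "{x,y} \<in> ES" then show "{f x, f y} \<in> ?ES'" by (metis image_empty image_insert image_eqI)
  qed
  have sub: "subgraph (f ` S) ?ES' V2 E2"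
    unfolding subgraph_def graph_def
  proof (intro conjI ballI)
    show "finite (f ` S)" using finS by blast
    show "f ` S \<subseteq> V2" using hom SV unfolding graph_hom_def by blast
  next
    fix e assume "e \<in> ?ES'"
    then obtain e0 where e0: "e0 \<in> ES" "e = f ` e0" by blast
    obtain p q where pq: "e0 = {p,q}" "p \<noteq> q" "p \<in> S" "q \<in> S" using gS e0(1) unfolding graph_def by blast
    have "f p \<noteq> f q" using inj pq by (meson inj_on_eq_iff)
    then show "\<exists>a b. e = {a, b} \<and> a \<noteq> b \<and> a \<in> f ` S \<and> b \<in> f ` S" using e0 pq by auto
  next
    show "?ES' \<subseteq> E2"
    proof
      fix e assume "e \<in> ?ES'"
      then obtain e0 where e0: "e0 \<in> ES" "e = f ` e0" by blast
      obtain p q where pq: "e0 = {p,q}" using gS e0(1) unfolding graph_def by blast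
      have "{p,q} \<in> E1" using e0 pq ESE by blast
      then show "e \<in> E2" using hom e0 pq unfolding graph_hom_def by auto
    qed
  qed
  define g where "g = \<psi> \<circ> inv_into S f"
  have bf: "bij_betw f S (f ` S)" using inj by (simp add: bij_betw_def)
  have bg: "bij_betw g (f ` S) VC" unfolding g_def
    using bij_betw_trans[OF bij_betw_inv_into[OF bf] bpsi] .
  have "graph_iso (f ` S) ?ES' VC EC g"
    unfolding graph_iso_def
  proof (intro conjI ballI)
    show "bij_betw g (f ` S) VC" by fact
  next
    fix a b assume "a \<in> f ` S" "b \<in> f ` S"
    then obtain x y where xy: "x \<in> S" "y \<in> S" "a = f x" "b = f y" by blast
    have "g a = \<psi> x" "g b = \<psi> y" using xy inj unfolding g_def by auto
    then show "({a, b} \<in> ?ES') = ({g a, g b} \<in> EC)"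
      using edge_iff[OF xy(1,2)] psi xy unfolding graph_iso_def by auto
  qed
  then show ?thesis unfolding is_copy_def isomorphic_def using sub by blast
qed

lemma covering_exists:
  assumes g2: "graph V2 E2"
  shows "\<exists>Cs. C_covering VC EC V2 E2 Cs"
proof -
  define A where "A = {S. \<exists>ES. is_copy VC EC V2 E2 S ES}"
  have fin2: "finite V2" using g2 unfolding graph_def by blast
  have "A \<subseteq> Pow V2" unfolding A_def is_copy_def subgraph_def by blast
  then have "finite A" using fin2 by (meson finite_Pow_iff finite_subset)
  then obtain Cs where Cs: "set Cs = A" using finite_list by blast
  have "C_covering VC EC V2 E2 Cs"
    unfolding C_covering_def
  proof (intro conjI ballI allI impI)
    fix X assume "X \<in> set Cs"
    then obtain ES where cp: "is_copy VC EC V2 E2 X ES" using Cs A_def by blast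
    show "X \<subseteq> V2" using cp unfolding is_copy_def subgraph_def by blast
    have finX: "finite X" using cp unfolding is_copy_def subgraph_def graph_def by blast
    obtain \<psi> where "graph_iso X ES VC EC \<psi>" using cp unfolding is_copy_def isomorphic_def by blast
    then have cX: "card X = card VC" unfolding graph_iso_def using bij_betw_same_card by blast
    obtain \<beta> where b: "bij_betw \<beta> X {1..card VC}"
      using bij_betw_iff_card[of X "{1..card VC}"] finX cX by auto
    have "C_coloring VC EC X (induced_edges E2 X) \<beta>"
      unfolding C_coloring_def
    proof (intro conjI ballI allI impI)
      fix v assume "v \<in> X" then show "\<beta> v \<in> {1..card VC}" using b bij_betwE by blast
    next
      fix S ES' assume cS: "is_copy VC EC X (induced_edges E2 X) S ES'"
      have SX: "S \<subseteq> X" using cS unfolding is_copy_def subgraph_def by blast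
      obtain \<psi>' where "graph_iso S ES' VC EC \<psi>'" using cS unfolding is_copy_def isomorphic_def by blast
      then have "card S = card VC" unfolding graph_iso_def using bij_betw_same_card by blast
      then have "S = X" using card_subset_eq[OF finX SX] cX by simp
      then show "inj_on \<beta> S" using b by (simp add: bij_betw_def)
    qed
    then show "C_colorable VC EC X (induced_edges E2 X)" unfolding C_colorable_def by blast
  next
    fix S ES assume cp: "is_copy VC EC V2 E2 S ES"
    then have "S \<in> set Cs" using Cs A_def by blast
    moreover have "subgraph S ES S (induced_edges E2 S)"
      using cp unfolding is_copy_def subgraph_def induced_edges_def graph_def by fastforce
    ultimately show "\<exists>X\<in>set Cs. subgraph S ES X (induced_edges E2 X)" by blast
  qed
  then show ?thesis by blast
qed

theorem lemma13:
  fixes V1 :: "'a set" and E1 :: "'a set set"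
    and V2 :: "'b set" and E2 :: "'b set set"
    and VC :: "'c set" and EC :: "'c set set"
  assumes "graph V1 E1" and "graph V2 E2" and "graph VC EC"
    and "core_iso_to V1 E1 VC EC" and "core_iso_to V2 E2 VC EC"
    and "\<exists>f. graph_hom V1 E1 V2 E2 f"
  shows "C_covering_number VC EC V1 E1 \<le> C_covering_number VC EC V2 E2"
proof -
  obtain f where hom: "graph_hom V1 E1 V2 E2 f" using assms(6) by blast
  obtain Cs0 where "C_covering VC EC V2 E2 Cs0" using covering_exists[OF assms(2)] by blast
  then have ex: "\<exists>r. \<exists>Cs. length Cs = r \<and> C_covering VC EC V2 E2 Cs" by blast
  have "\<exists>Cs. length Cs = C_covering_number VC EC V2 E2 \<and> C_covering VC EC V2 E2 Cs"
    unfolding C_covering_number_def by (rule LeastI_ex[OF ex])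
  then obtain Cs2 where Cs2: "length Cs2 = C_covering_number VC EC V2 E2"
      "C_covering VC EC V2 E2 Cs2" by blast
  define Cs1 where "Cs1 = map (\<lambda>X. {v\<in>V1. f v \<in> X}) Cs2"
  have "C_covering VC EC V1 E1 Cs1"
    unfolding C_covering_def
  proof (intro conjI ballI allI impI)
    fix Y assume "Y \<in> set Cs1"
    then obtain X where X: "X \<in> set Cs2" "Y = {v\<in>V1. f v \<in> X}" unfolding Cs1_def by auto
    show "Y \<subseteq> V1" using X by blast
    have "C_colorable VC EC X (induced_edges E2 X)"
      using Cs2(2) X(1) unfolding C_covering_def by simp
    then obtain c where c: "C_coloring VC EC X (induced_edges E2 X) c"
      unfolding C_colorable_def by blast
    have homXY: "graph_hom Y (induced_edges E1 Y) X (induced_edges E2 X) f"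
      unfolding graph_hom_def
    proof (intro conjI ballI allI impI)
      fix v assume "v \<in> Y" then show "f v \<in> X" using X(2) by simp
    next
      fix u v assume a: "{u, v} \<in> induced_edges E1 Y"
      then have "{u,v} \<in> E1" "u \<in> Y" "v \<in> Y" unfolding induced_edges_def by auto
      then have "{f u, f v} \<in> E2" "f u \<in> X" "f v \<in> X" using hom X(2) unfolding graph_hom_def by auto
      then show "{f u, f v} \<in> induced_edges E2 X" unfolding induced_edges_def by auto
    qed
    have "C_coloring VC EC Y (induced_edges E1 Y) (c \<circ> f)"
      unfolding C_coloring_def
    proof (intro conjI ballI allI impI)
      fix v assume "v \<in> Y" then show "(c \<circ> f) v \<in> {1..card VC}"
        using X c unfolding C_coloring_def by simp
    next
      fix S ES assume cS: "is_copy VC EC Y (induced_edges E1 Y) S ES"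
      have s1: "subgraph S ES Y (induced_edges E1 Y)" "isomorphic S ES VC EC"
        using cS unfolding is_copy_def by auto
      have "Y \<subseteq> V1" "induced_edges E1 Y \<subseteq> E1" using X(2) unfolding induced_edges_def by auto
      then have "subgraph S ES V1 E1" using s1(1) unfolding subgraph_def by blast
      then have "is_copy VC EC V1 E1 S ES" using s1(2) unfolding is_copy_def by blast
      then have inj: "inj_on f S" using copy_inj[OF hom assms(2) assms(5)] by blast
      have "is_copy VC EC X (induced_edges E2 X) (f ` S) ((\<lambda>e. f ` e) ` ES)"
        using image_copy[OF homXY cS inj] .
      then show "inj_on (c \<circ> f) S" using inj c comp_inj_on unfolding C_coloring_def by blast
    qed
    then show "C_colorable VC EC Y (induced_edges E1 Y)" unfolding C_colorable_def by blast
  next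
    fix S ES assume cS: "is_copy VC EC V1 E1 S ES"
    have inj: "inj_on f S" using copy_inj[OF hom assms(2) assms(5) cS] .
    have "is_copy VC EC V2 E2 (f ` S) ((\<lambda>e. f ` e) ` ES)" using image_copy[OF hom cS inj] .
    then obtain X where X: "X \<in> set Cs2" "subgraph (f ` S) ((\<lambda>e. f ` e) ` ES) X (induced_edges E2 X)"
      using Cs2(2) unfolding C_covering_def by blast
    let ?Y = "{v\<in>V1. f v \<in> X}"
    have "?Y \<in> set Cs1" using X(1) unfolding Cs1_def by auto
    moreover have "subgraph S ES ?Y (induced_edges E1 ?Y)"
    proof -
      have sub: "subgraph S ES V1 E1" using cS unfolding is_copy_def by blast
      have fSX: "f ` S \<subseteq> X" using X(2) unfolding subgraph_def by blast
      have gS: "graph S ES" using sub unfolding subgraph_def by blast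
      have eS: "e \<subseteq> S" if "e \<in> ES" for e
      proof -
        have "\<exists>u v. e = {u, v} \<and> u \<noteq> v \<and> u \<in> S \<and> v \<in> S"
          using gS that unfolding graph_def by (elim conjE) (rule bspec)
        then obtain u v where "e = {u,v}" "u \<in> S" "v \<in> S" by (elim exE conjE)
        then show ?thesis by simp
      qed
      have SY: "S \<subseteq> ?Y" using sub fSX unfolding subgraph_def by auto
      have ESE: "ES \<subseteq> E1" using sub unfolding subgraph_def by (elim conjE)
      have "ES \<subseteq> induced_edges E1 ?Y"
      proof
        fix e assume "e \<in> ES"
        then have "e \<in> E1" "e \<subseteq> ?Y" using ESE eS SY by auto
        then show "e \<in> induced_edges E1 ?Y" unfolding induced_edges_def by simp
      qed
      then show ?thesis using gS SY unfolding subgraph_def by simp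
    qed
    ultimately show "\<exists>X\<in>set Cs1. subgraph S ES X (induced_edges E1 X)" by blast
  qed
  moreover have "length Cs1 = length Cs2" unfolding Cs1_def by simp
  ultimately have "\<exists>Cs. length Cs = length Cs2 \<and> C_covering VC EC V1 E1 Cs" by blast
  then have "C_covering_number VC EC V1 E1 \<le> length Cs2"
    unfolding C_covering_number_def by (rule Least_le)
  then show ?thesis using Cs2(1) by simp
qed

end
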